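(* Let $X$ be a $G$-space and $\rho_X\colon X\to X/G$ the orbit map. Then $\mathrm{cat}(\rho_X)\le\mathrm{cat}^{G,\infty}(X)$.
   Context: All spaces are well-pointed CW complexes, $G$ a topological group acting cellularly; $x_0\in X$ is the base point. For a map $f\colon X\to Y$, $\mathrm{cat}(f)$ is the least $n\ge0$ such that $X$ has an open cover by $n+1$ sets on each of which $f$ is nullhomotopic. $PX$ is the path space; $\mathcal{P}_k(X)=\{(\gamma_1,\dots,\gamma_k)\in(PX)^k\mid G\gamma_i(1)=G\gamma_{i+1}(0),\ 1\le i\le k-1\}$; $P^k_*(X)=\{(\gamma_1,\dots,\gamma_k)\in\mathcal{P}_k(X)\mid\gamma_1(0)=x_0\}$ with fibration $q_k\colon P^k_*(X)\to X$, $q_k(\gamma_1,\dots,\gamma_k)=\gamma_k(1)$. $\mathrm{secat}(f)$ (reduced) is the least $n$ such that the base of $f$ has an open cover $U_0,\dots,U_n$ with homotopy sections of $f$ over each $U_i$. $\mathrm{cat}^{G,k}(X)=\mathrm{secat}(q_k)$ and $\mathrm{cat}^{G,\infty}(X)=\min_{k\ge1}\mathrm{cat}^{G,k}(X)$. *)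

theory Defs
  imports "HOL-Analysis.Analysis" "HOL-Algebra.Group" "HOL-Library.Extended_Nat"
begin

definition topological_group :: "('g, 'b) monoid_scheme \<Rightarrow> 'g topology \<Rightarrow> bool" where
  "topological_group G TG \<longleftrightarrow>
     group G \<and> topspace TG = carrier G \<and>
     continuous_map (prod_topology TG TG) TG (\<lambda>(g, h). g \<otimes>\<^bsub>G\<^esub> h) \<and>
     continuous_map TG TG (\<lambda>g. inv\<^bsub>G\<^esub> g)"

definition G_space :: "('g, 'b) monoid_scheme \<Rightarrow> 'g topology \<Rightarrow> 'a topology \<Rightarrow> ('g \<Rightarrow> 'a \<Rightarrow> 'a) \<Rightarrow> bool" where
  "G_space G TG X act \<longleftrightarrow>
     topological_group G TG \<and>
     continuous_map (prod_topology TG X) X (\<lambda>(g, x). act g x) \<and>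
     (\<forall>x\<in>topspace X. act \<one>\<^bsub>G\<^esub> x = x) \<and>
     (\<forall>g\<in>carrier G. \<forall>h\<in>carrier G. \<forall>x\<in>topspace X. act (g \<otimes>\<^bsub>G\<^esub> h) x = act g (act h x))"

text \<open>The orbit G x; the orbit map is \<open>\<rho>_X = G_orbit G act\<close>.\<close>
definition G_orbit :: "('g, 'b) monoid_scheme \<Rightarrow> ('g \<Rightarrow> 'a \<Rightarrow> 'a) \<Rightarrow> 'a \<Rightarrow> 'a set" where
  "G_orbit G act x = {act g x | g. g \<in> carrier G}"

text \<open>The orbit space X/G with the quotient topology (points are orbits).  The family below
  is already a topology, so generating a topology from it changes nothing.\<close>
definition orbit_space :: "('g, 'b) monoid_scheme \<Rightarrow> 'a topology \<Rightarrow> ('g \<Rightarrow> 'a \<Rightarrow> 'a) \<Rightarrow> 'a set topology" where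
  "orbit_space G X act = topology_generated_by
     {U. U \<subseteq> G_orbit G act ` topspace X \<and> openin X {x \<in> topspace X. G_orbit G act x \<in> U}}"

definition paths_in :: "'a topology \<Rightarrow> (real \<Rightarrow> 'a) set" where
  "paths_in X = {p. pathin X p \<and> (\<forall>t. t \<notin> {0..1} \<longrightarrow> p t = undefined)}"

definition path_space :: "'a topology \<Rightarrow> (real \<Rightarrow> 'a) topology" where
  "path_space X = topology_generated_by
     {{p \<in> paths_in X. p ` K \<subseteq> V} | K V.
        compactin (subtopology euclideanreal {0..1}) K \<and> openin X V}"

text \<open>\<open>\<P>_k(X)\<close>: k-tuples of paths, indexed by 0..k-1, with G gamma_i(1) = G gamma_(i+1)(0).\<close>
definition multipath_space :: "('g, 'b) monoid_scheme \<Rightarrow> ('g \<Rightarrow> 'a \<Rightarrow> 'a) \<Rightarrow> 'a topology \<Rightarrow> nat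
    \<Rightarrow> (nat \<Rightarrow> real \<Rightarrow> 'a) topology" where
  "multipath_space G act X k =
     subtopology (product_topology (\<lambda>i. path_space X) {..<k})
       {\<gamma>. \<forall>i. Suc i < k \<longrightarrow> G_orbit G act (\<gamma> i 1) = G_orbit G act (\<gamma> (Suc i) 0)}"

definition based_multipath_space :: "('g, 'b) monoid_scheme \<Rightarrow> ('g \<Rightarrow> 'a \<Rightarrow> 'a) \<Rightarrow> 'a topology \<Rightarrow> 'a
    \<Rightarrow> nat \<Rightarrow> (nat \<Rightarrow> real \<Rightarrow> 'a) topology" where
  "based_multipath_space G act X x0 k =
     subtopology (multipath_space G act X k) {\<gamma>. \<gamma> 0 0 = x0}"

definition end_map :: "nat \<Rightarrow> (nat \<Rightarrow> real \<Rightarrow> 'a) \<Rightarrow> 'a" where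
  "end_map k \<gamma> = \<gamma> (k - 1) 1"

text \<open>LS category of a map (reduced), with value \<infinity> if no finite cover exists.\<close>
definition map_cat :: "'a topology \<Rightarrow> 'c topology \<Rightarrow> ('a \<Rightarrow> 'c) \<Rightarrow> enat" where
  "map_cat X Y f = Inf {enat n | n. \<exists>U :: nat \<Rightarrow> 'a set.
      (\<forall>i\<le>n. openin X (U i)) \<and> topspace X \<subseteq> (\<Union>i\<le>n. U i) \<and>
      (\<forall>i\<le>n. \<exists>c. homotopic_with (\<lambda>_. True) (subtopology X (U i)) Y f (\<lambda>_. c))}"

text \<open>Sectional category (reduced) of a map p : E \<rightarrow> B, with value \<infinity> if no finite cover exists.\<close>
definition secat :: "'e topology \<Rightarrow> 'a topology \<Rightarrow> ('e \<Rightarrow> 'a) \<Rightarrow> enat" where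
  "secat E B p = Inf {enat n | n. \<exists>U :: nat \<Rightarrow> 'a set.
      (\<forall>i\<le>n. openin B (U i)) \<and> topspace B \<subseteq> (\<Union>i\<le>n. U i) \<and>
      (\<forall>i\<le>n. \<exists>s. continuous_map (subtopology B (U i)) E s \<and>
                 homotopic_with (\<lambda>_. True) (subtopology B (U i)) B (p \<circ> s) id)}"

definition cat_G_k :: "('g, 'b) monoid_scheme \<Rightarrow> ('g \<Rightarrow> 'a \<Rightarrow> 'a) \<Rightarrow> 'a topology \<Rightarrow> 'a \<Rightarrow> nat \<Rightarrow> enat" where
  "cat_G_k G act X x0 k = secat (based_multipath_space G act X x0 k) X (end_map k)"

definition cat_G_infty :: "('g, 'b) monoid_scheme \<Rightarrow> ('g \<Rightarrow> 'a \<Rightarrow> 'a) \<Rightarrow> 'a topology \<Rightarrow> 'a \<Rightarrow> enat" where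
  "cat_G_infty G act X x0 = (INF k\<in>{1..}. cat_G_k G act X x0 k)"

end

theory Submission
  imports Defs
begin

lemma topspace_path_space: "topspace (path_space X) = paths_in X"
proof -
  have "paths_in X \<in> {{p \<in> paths_in X. p ` K \<subseteq> V} | K V.
        compactin (subtopology euclideanreal {0..1}) K \<and> openin X V}"
    by (rule CollectI, rule exI[of _ "{}"], rule exI[of _ "topspace X"]) auto
  then show ?thesis unfolding path_space_def by auto
qed

lemma eval_cont:
  "continuous_map (prod_topology (top_of_set {0..1}) (path_space X)) X (\<lambda>(t,p). p t)"
proof -
  have ts: "topspace (prod_topology (top_of_set {0..1::real}) (path_space X)) = {0..1} \<times> paths_in X"
    by (simp add: topspace_path_space)
  show ?thesis
  unfolding continuous_map_def
  proof (intro conjI allI impI)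
    show "(\<lambda>(t,p). p t) \<in> topspace (prod_topology (top_of_set {0..1}) (path_space X)) \<rightarrow> topspace X"
      unfolding ts paths_in_def pathin_def continuous_map_def by auto
    fix V assume V: "openin X V"
    show "openin (prod_topology (top_of_set {0..1}) (path_space X))
       {x \<in> topspace (prod_topology (top_of_set {0..1}) (path_space X)). (case x of (t, p) \<Rightarrow> p t) \<in> V}"
    proof (subst openin_subopen, intro ballI)
      fix z assume "z \<in> {x \<in> topspace (prod_topology (top_of_set {0..1}) (path_space X)). (case x of (t, p) \<Rightarrow> p t) \<in> V}"
      then obtain t p where z: "z = (t,p)" and t: "t \<in> {0..1}" and p: "p \<in> paths_in X" and ptV: "p t \<in> V"
        unfolding ts by auto
      have pc: "continuous_map (top_of_set {0..1}) X p" using p by (simp add: paths_in_def pathin_def)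
      then have "openin (top_of_set {0..1}) {s \<in> topspace (top_of_set {0..1::real}). p s \<in> V}"
        using V by (simp add: continuous_map_def)
      then have op: "openin (top_of_set {0..1}) {s \<in> {0..1::real}. p s \<in> V}" by simp
      obtain d where d: "d > 0" and dsub: "\<And>s. s \<in> {0..1} \<Longrightarrow> dist s t < d \<Longrightarrow> p s \<in> V"
        using op[unfolded openin_euclidean_subtopology_iff] t ptV by (metis (no_types, lifting) mem_Collect_eq)
      define K where "K = cball t (d/2) \<inter> {0..1}"
      have Kc: "compactin (subtopology euclideanreal {0..1}) K"
        unfolding compactin_subtopology K_def by (auto intro: compact_Int_closed)
      define W where "W = {q \<in> paths_in X. q ` K \<subseteq> V}"
      have Wo: "openin (path_space X) W"
        unfolding path_space_def W_def
        by (rule topology_generated_by_Basis) (use Kc V in blast)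
      have pW: "p \<in> W" unfolding W_def K_def using p d dsub
        by (auto simp: dist_commute)
      define B where "B = ball t (d/2) \<inter> {0..1}"
      have Bo: "openin (top_of_set {0..1}) B" unfolding B_def
        by (metis Int_commute open_ball openin_open_Int)
      show "\<exists>T. openin (prod_topology (top_of_set {0..1}) (path_space X)) T \<and> z \<in> T \<and>
          T \<subseteq> {x \<in> topspace (prod_topology (top_of_set {0..1}) (path_space X)). (case x of (t, p) \<Rightarrow> p t) \<in> V}"
      proof (intro exI conjI)
        show "openin (prod_topology (top_of_set {0..1}) (path_space X)) (B \<times> W)"
          using Bo Wo by (simp add: openin_prod_Times_iff)
        show "z \<in> B \<times> W" using z t pW d by (simp add: B_def)
        show "B \<times> W \<subseteq> {x \<in> topspace (prod_topology (top_of_set {0..1}) (path_space X)). (case x of (t, p) \<Rightarrow> p t) \<in> V}"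
          unfolding ts B_def W_def K_def by auto
      qed
    qed
  qed
qed

lemma orbit_cont:
  "continuous_map X (orbit_space G X act) (G_orbit G act)"
proof -
  let ?S = "{U. U \<subseteq> G_orbit G act ` topspace X \<and> openin X {x \<in> topspace X. G_orbit G act x \<in> U}}"
  have top: "openin X {x \<in> topspace X. G_orbit G act x \<in> G_orbit G act ` topspace X}"
  proof -
    have "{x \<in> topspace X. G_orbit G act x \<in> G_orbit G act ` topspace X} = topspace X" by auto
    then show ?thesis by simp
  qed
  have ts: "topspace (orbit_space G X act) = G_orbit G act ` topspace X"
  proof -
    have m: "G_orbit G act ` topspace X \<in> ?S" using top by simp
    have "\<Union>?S = G_orbit G act ` topspace X"
    proof
      show "\<Union>?S \<subseteq> G_orbit G act ` topspace X" by auto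
      show "G_orbit G act ` topspace X \<subseteq> \<Union>?S" using m by (rule Union_upper)
    qed
    then show ?thesis unfolding orbit_space_def topology_generated_by_topspace .
  qed
  have gen: "openin X {x \<in> topspace X. G_orbit G act x \<in> U}" if "generate_topology_on ?S U" for U
    using that
  proof (induct rule: generate_topology_on.induct)
    case Empty
    then show ?case by simp
  next
    case (Int a b)
    have "{x \<in> topspace X. G_orbit G act x \<in> a \<inter> b} = {x \<in> topspace X. G_orbit G act x \<in> a} \<inter> {x \<in> topspace X. G_orbit G act x \<in> b}" by auto
    moreover have "openin X ({x \<in> topspace X. G_orbit G act x \<in> a} \<inter> {x \<in> topspace X. G_orbit G act x \<in> b})"
      by (rule openin_Int[OF Int(2) Int(4)])
    ultimately show ?case by simp
  next
    case (UN K)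
    have "{x \<in> topspace X. G_orbit G act x \<in> \<Union>K} = (\<Union>k\<in>K. {x \<in> topspace X. G_orbit G act x \<in> k})" by auto
    moreover have "openin X (\<Union>k\<in>K. {x \<in> topspace X. G_orbit G act x \<in> k})"
      using UN(2) by (intro openin_Union) auto
    ultimately show ?case by simp
  next
    case (Basis s)
    then show ?case by simp
  qed
  show ?thesis unfolding continuous_map_def
  proof (intro conjI allI impI)
    show "G_orbit G act \<in> topspace X \<rightarrow> topspace (orbit_space G X act)" using ts by auto
    fix U assume "openin (orbit_space G X act) U"
    then have "generate_topology_on ?S U" unfolding orbit_space_def by (rule openin_topology_generated_by)
    then show "openin X {x \<in> topspace X. G_orbit G act x \<in> U}" by (rule gen)
  qed
qed

lemma comp_cont:
  assumes s: "continuous_map Z (based_multipath_space G act X x0 k) s" and j: "j < k"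
  shows "continuous_map Z (path_space X) (\<lambda>x. s x j)"
proof -
  have "continuous_map Z (product_topology (\<lambda>i. path_space X) {..<k}) s"
    using s unfolding based_multipath_space_def multipath_space_def
    by (simp add: continuous_map_in_subtopology)
  then show ?thesis
    using continuous_map_compose[OF _ continuous_map_product_projection[of j "{..<k}" "\<lambda>i. path_space X"]] j
    by (simp add: o_def)
qed

lemma step_hom:
  assumes s: "continuous_map Z (based_multipath_space G act X x0 k) s" and j: "j < k"
  shows "homotopic_with (\<lambda>_. True) Z (orbit_space G X act)
           (\<lambda>x. G_orbit G act (s x j 1)) (\<lambda>x. G_orbit G act (s x j 0))"
proof -
  define h where "h = (\<lambda>y::real \<times> _. G_orbit G act (s (snd y) j (1 - fst y)))"
  have f: "continuous_map (prod_topology (top_of_set {0..1::real}) Z) euclideanreal fst"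
    using continuous_map_fst continuous_map_in_subtopology by blast
  have a0: "continuous_map (prod_topology (top_of_set {0..1::real}) Z) euclideanreal (\<lambda>y. 1 - fst y)"
    by (intro continuous_intros f)
  have a: "continuous_map (prod_topology (top_of_set {0..1::real}) Z) (top_of_set {0..1}) (\<lambda>y. 1 - fst y)"
  proof -
    have "(\<lambda>y. 1 - fst y) \<in> topspace (prod_topology (top_of_set {0..1::real}) Z) \<rightarrow> {0..1}"
      by auto
    then show ?thesis using a0 unfolding continuous_map_in_subtopology by blast
  qed
  have b: "continuous_map (prod_topology (top_of_set {0..1::real}) Z) (path_space X) (\<lambda>y. s (snd y) j)"
    using continuous_map_compose[OF continuous_map_snd comp_cont[OF s j]]
    by (simp add: o_def)
  have c1: "continuous_map (prod_topology (top_of_set {0..1::real}) Z) (prod_topology (top_of_set {0..1}) (path_space X))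
      (\<lambda>y. (1 - fst y, s (snd y) j))"
    by (rule continuous_map_pairedI[OF a b])
  have c2: "continuous_map (prod_topology (top_of_set {0..1::real}) Z) X ((\<lambda>(t,p). p t) \<circ> (\<lambda>y. (1 - fst y, s (snd y) j)))"
    by (rule continuous_map_compose[OF c1 eval_cont])
  have "continuous_map (prod_topology (top_of_set {0..1::real}) Z) (orbit_space G X act) h"
    using continuous_map_compose[OF c2 orbit_cont] by (simp add: h_def o_def)
  then show ?thesis unfolding homotopic_with_def
    by (intro exI[of _ h]) (simp add: h_def)
qed

lemma hom_eq_right:
  assumes "homotopic_with P Z Y f g" "\<And>x. x \<in> topspace Z \<Longrightarrow> g x = g' x" "P g'"
  shows "homotopic_with P Z Y f g'"
proof -
  have "continuous_map Z Y g" using homotopic_with_imp_continuous_maps[OF assms(1)] by simp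
  moreover have "P g" using homotopic_with_imp_property[OF assms(1)] by simp
  ultimately have "homotopic_with P Z Y g g'" using assms(2,3) by (intro homotopic_with_equal)
  then show ?thesis using assms(1) homotopic_with_trans by blast
qed

lemma ts_based:
  assumes "\<gamma> \<in> topspace (based_multipath_space G act X x0 k)"
  shows "\<gamma> 0 0 = x0" "\<And>i. Suc i < k \<Longrightarrow> G_orbit G act (\<gamma> i 1) = G_orbit G act (\<gamma> (Suc i) 0)"
  using assms unfolding based_multipath_space_def multipath_space_def topspace_subtopology
  by blast+

lemma chain_hom:
  assumes s: "continuous_map Z (based_multipath_space G act X x0 k) s"
  shows "j < k \<Longrightarrow> homotopic_with (\<lambda>_. True) Z (orbit_space G X act)
           (\<lambda>x. G_orbit G act (s x j 1)) (\<lambda>_. G_orbit G act x0)"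
proof (induction j)
  case 0
  have ts: "s x \<in> topspace (based_multipath_space G act X x0 k)" if "x \<in> topspace Z" for x
    using s that unfolding continuous_map_def by blast
  have "G_orbit G act (s x 0 0) = G_orbit G act x0" if "x \<in> topspace Z" for x
    using ts_based(1)[OF ts[OF that]] by simp
  then show ?case by (rule hom_eq_right[OF step_hom[OF s 0(1)]]) simp_all
next
  case (Suc j)
  have ts: "s x \<in> topspace (based_multipath_space G act X x0 k)" if "x \<in> topspace Z" for x
    using s that unfolding continuous_map_def by blast
  have "G_orbit G act (s x (Suc j) 0) = G_orbit G act (s x j 1)" if "x \<in> topspace Z" for x
    using ts_based(2)[OF ts[OF that] Suc.prems] by simp
  then have 1: "homotopic_with (\<lambda>_. True) Z (orbit_space G X act)
           (\<lambda>x. G_orbit G act (s x (Suc j) 1)) (\<lambda>x. G_orbit G act (s x j 1))"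
    by (rule hom_eq_right[OF step_hom[OF s Suc.prems]]) simp_all
  have 2: "homotopic_with (\<lambda>_. True) Z (orbit_space G X act)
           (\<lambda>x. G_orbit G act (s x j 1)) (\<lambda>_. G_orbit G act x0)"
    using Suc.IH Suc.prems by simp
  show ?case by (rule homotopic_with_trans[OF 1 2])
qed

theorem mainTheorem5:
  fixes G :: "('g, 'b) monoid_scheme" and TG :: "'g topology"
    and X :: "'a topology" and act :: "'g \<Rightarrow> 'a \<Rightarrow> 'a" and x0 :: 'a
  assumes "G_space G TG X act"
    and "x0 \<in> topspace X"
  shows "map_cat X (orbit_space G X act) (G_orbit G act) \<le> cat_G_infty G act X x0"
  unfolding cat_G_infty_def
proof (rule INF_greatest)
  fix k :: nat assume k: "k \<in> {1..}"
  show "map_cat X (orbit_space G X act) (G_orbit G act) \<le> cat_G_k G act X x0 k"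
    unfolding map_cat_def cat_G_k_def secat_def
  proof (rule Inf_superset_mono, rule subsetI)
    fix m assume "m \<in> {enat n |n. \<exists>U. (\<forall>i\<le>n. openin X (U i)) \<and> topspace X \<subseteq> (\<Union>i\<le>n. U i) \<and>
               (\<forall>i\<le>n. \<exists>s. continuous_map (subtopology X (U i)) (based_multipath_space G act X x0 k) s \<and>
                 homotopic_with (\<lambda>_. True) (subtopology X (U i)) X (end_map k \<circ> s) id)}"
    then obtain n U where m: "m = enat n" and U: "\<forall>i\<le>n. openin X (U i)" "topspace X \<subseteq> (\<Union>i\<le>n. U i)"
      and S: "\<forall>i\<le>n. \<exists>s. continuous_map (subtopology X (U i)) (based_multipath_space G act X x0 k) s \<and>
                 homotopic_with (\<lambda>_. True) (subtopology X (U i)) X (end_map k \<circ> s) id"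
      by auto
    have hc: "\<exists>c. homotopic_with (\<lambda>_. True) (subtopology X (U i)) (orbit_space G X act) (G_orbit G act) (\<lambda>_. c)"
      if i: "i \<le> n" for i
    proof -
      obtain s where sc: "continuous_map (subtopology X (U i)) (based_multipath_space G act X x0 k) s"
        and sh: "homotopic_with (\<lambda>_. True) (subtopology X (U i)) X (end_map k \<circ> s) id"
        using S i by blast
      have "homotopic_with (\<lambda>_. True) (subtopology X (U i)) (orbit_space G X act)
              (G_orbit G act \<circ> (end_map k \<circ> s)) (G_orbit G act \<circ> id)"
        by (rule homotopic_with_compose_continuous_map_left[OF sh orbit_cont]) simp_all
      then have h1: "homotopic_with (\<lambda>_. True) (subtopology X (U i)) (orbit_space G X act)
              (G_orbit G act) (\<lambda>x. G_orbit G act (s x (k - 1) 1))"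
        by (simp add: homotopic_with_sym o_def end_map_def)
      have "homotopic_with (\<lambda>_. True) (subtopology X (U i)) (orbit_space G X act)
           (\<lambda>x. G_orbit G act (s x (k - 1) 1)) (\<lambda>_. G_orbit G act x0)"
        using chain_hom[OF sc] k by simp
      then show ?thesis using h1 homotopic_with_trans by blast
    qed
    then show "m \<in> {enat n |n. \<exists>U. (\<forall>i\<le>n. openin X (U i)) \<and> topspace X \<subseteq> (\<Union>i\<le>n. U i) \<and>
      (\<forall>i\<le>n. \<exists>c. homotopic_with (\<lambda>_. True) (subtopology X (U i)) (orbit_space G X act) (G_orbit G act) (\<lambda>_. c))}"
      unfolding m
    proof (intro CollectI exI conjI)
      show "enat n = enat n" ..
      show "\<forall>i\<le>n. openin X (U i)" by (rule U(1))
      show "topspace X \<subseteq> (\<Union>i\<le>n. U i)" by (rule U(2))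
    qed (use hc in \<open>blast\<close>)
  qed
qed

end
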